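(* For each $2p\in\{140, 196, 220, 260, 308, 340\}$ there exists a cyclic DCA$(4,2p+1;2p)$ satisfying P1 and P2.
   Context: A difference covering array DCA$(k,\eta;n)$ over $\mathbb{Z}_n$ (a cyclic DCA) is an $\eta\times k$ matrix $Q=[q(i,j)]$ with entries in $\mathbb{Z}_n$ such that for every pair of distinct columns $j,j'$ the multiset $\{q(i,j)-q(i,j') : 0\le i\le \eta-1\}$ contains every element of $\mathbb{Z}_n$ at least once. A DCA$(k,n+1;n)$ is taken in normalized form: all entries of its last row (row $n$) and last column (column $k-1$) equal $0$. It satisfies P1 if $0$ occurs at least twice in every column, and P2 if for all distinct columns $j,j'$ with $j\neq k-1\neq j'$, the set $\{q(i,j)-q(i,j') : 0\le i\le n-1\}$ equals $\mathbb{Z}_n\setminus\{0\}$. *)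

theory Defs
  imports Main
begin

text \<open>An eta x k array over Z_n is represented as a function Q :: nat => nat => int,
  where Q i j (i < eta, j < k) is the entry in row i, column j, and the entry is
  taken as a representative in {0..<n}.\<close>

definition is_DCA :: "nat \<Rightarrow> nat \<Rightarrow> nat \<Rightarrow> (nat \<Rightarrow> nat \<Rightarrow> int) \<Rightarrow> bool" where
  "is_DCA k eta n Q \<longleftrightarrow>
     (\<forall>i<eta. \<forall>j<k. Q i j \<in> {0..<int n}) \<and>
     (\<forall>j<k. \<forall>j'<k. j \<noteq> j' \<longrightarrow>
        (\<forall>d\<in>{0..<int n}. \<exists>i<eta. (Q i j - Q i j') mod int n = d))"

definition DCA_normalized :: "nat \<Rightarrow> nat \<Rightarrow> (nat \<Rightarrow> nat \<Rightarrow> int) \<Rightarrow> bool" where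
  "DCA_normalized k n Q \<longleftrightarrow>
     (\<forall>j<k. Q n j = 0) \<and> (\<forall>i<n+1. Q i (k-1) = 0)"

definition DCA_P1 :: "nat \<Rightarrow> nat \<Rightarrow> (nat \<Rightarrow> nat \<Rightarrow> int) \<Rightarrow> bool" where
  "DCA_P1 k n Q \<longleftrightarrow> (\<forall>j<k. card {i. i < n+1 \<and> Q i j = 0} \<ge> 2)"

definition DCA_P2 :: "nat \<Rightarrow> nat \<Rightarrow> (nat \<Rightarrow> nat \<Rightarrow> int) \<Rightarrow> bool" where
  "DCA_P2 k n Q \<longleftrightarrow>
     (\<forall>j<k. \<forall>j'<k. j \<noteq> j' \<and> j \<noteq> k-1 \<and> j' \<noteq> k-1 \<longrightarrow>
        {(Q i j - Q i j') mod int n | i. i < n} = {1..<int n})"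

end

theory Submission
  imports Defs
begin

fun merge :: "int list \<Rightarrow> int list \<Rightarrow> int list" where
  "merge [] ys = ys"
| "merge xs [] = xs"
| "merge (x#xs) (y#ys) = (if x \<le> y then x # merge xs (y#ys) else y # merge (x#xs) ys)"

fun merge_pairs :: "int list list \<Rightarrow> int list list" where
  "merge_pairs (a#b#xs) = merge a b # merge_pairs xs"
| "merge_pairs xs = xs"

lemma length_merge_pairs: "length (merge_pairs xs) \<le> length xs"
  by (induction xs rule: merge_pairs.induct) auto

function merge_all :: "int list list \<Rightarrow> int list" where
  "merge_all [] = []"
| "merge_all [x] = x"
| "merge_all (a#b#xs) = merge_all (merge_pairs (a#b#xs))"
  by pat_completeness auto
termination
  by (relation "measure length") (auto simp: le_imp_less_Suc length_merge_pairs)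

definition msort :: "int list \<Rightarrow> int list" where
  "msort xs = merge_all (map (\<lambda>x. [x]) xs)"

lemma set_merge[simp]: "set (merge xs ys) = set xs \<union> set ys"
  by (induction xs ys rule: merge.induct) auto

lemma set_merge_pairs: "\<Union> (set ` set (merge_pairs xss)) = \<Union> (set ` set xss)"
  by (induction xss rule: merge_pairs.induct) auto

lemma set_merge_all: "set (merge_all xss) = \<Union> (set ` set xss)"
proof (induction xss rule: merge_all.induct)
  case (3 a b xs)
  then show ?case using set_merge_pairs[of "a#b#xs"] by simp
qed auto

lemma set_msort: "set (msort xs) = set xs"
  unfolding msort_def by (auto simp: set_merge_all)

definition mkQ :: "nat \<Rightarrow> (nat \<Rightarrow> int list) \<Rightarrow> nat \<Rightarrow> nat \<Rightarrow> int" where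
  "mkQ n cols i j = (if i < n \<and> j < 3 then cols j ! i else 0)"

lemma negmod:
  assumes "0 < (n::int)" "(b - a) mod n \<noteq> 0"
  shows "(a - b) mod n = n - (b - a) mod n"
proof -
  have "(a - b) mod n = (- (b - a)) mod n" by simp
  also have "\<dots> = n - (b - a) mod n"
    unfolding zmod_zminus1_eq_if using assms(2) by simp
  finally show ?thesis .
qed

lemma set_map2_nth:
  assumes "length xs = n" "length ys = n"
  shows "set (map2 f xs ys) = {f (xs!i) (ys!i) | i. i < n}"
proof -
  have "map2 f xs ys = map (\<lambda>i. f (xs!i) (ys!i)) [0..<n]"
    using assms by (intro nth_equalityI) auto
  then show ?thesis by auto
qed

lemma abs_main:
  fixes n :: nat and cols :: "nat \<Rightarrow> int list"
  assumes n2: "n \<ge> 2"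
    and len: "\<And>j. j < 3 \<Longrightarrow> length (cols j) = n"
    and perm: "\<And>j. j < 3 \<Longrightarrow> set (cols j) = {0..<int n}"
    and dif: "\<And>j j'. j < 3 \<Longrightarrow> j' < 3 \<Longrightarrow> j < j' \<Longrightarrow>
      set (map2 (\<lambda>x y. (x - y) mod int n) (cols j) (cols j')) = {1..<int n}"
  shows "is_DCA 4 (n+1) n (mkQ n cols) \<and> DCA_normalized 4 n (mkQ n cols)
    \<and> DCA_P1 4 n (mkQ n cols) \<and> DCA_P2 4 n (mkQ n cols)"
proof -
  define Q where "Q = mkQ n cols"
  have npos: "0 < int n" using n2 by simp
  have F1: "cols j ! i \<in> {0..<int n}" if "j < 3" "i < n" for j i
    using perm[OF that(1)] len[OF that(1)] that(2) nth_mem by metis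
  have F2: "\<exists>i<n. cols j ! i = v" if "j < 3" "v \<in> {0..<int n}" for j v
    using perm[OF that(1)] len[OF that(1)] that(2) by (metis in_set_conv_nth)
  have F3a: "{(cols j ! i - cols j' ! i) mod int n | i. i < n} = {1..<int n}"
    if "j < 3" "j' < 3" "j < j'" for j j'
  proof -
    have e: "set (map2 (\<lambda>x y. (x - y) mod int n) (cols j) (cols j')) = {(cols j ! i - cols j' ! i) mod int n | i. i < n}"
      by (rule set_map2_nth[OF len[OF that(1)] len[OF that(2)]])
    show ?thesis unfolding e[symmetric] by (rule dif[OF that])
  qed
  have F3: "{(cols j ! i - cols j' ! i) mod int n | i. i < n} = {1..<int n}"
    if "j < 3" "j' < 3" "j \<noteq> j'" for j j'
  proof (cases "j < j'")
    case True then show ?thesis using F3a that by blast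
  next
    case False
    then have S: "{(cols j' ! i - cols j ! i) mod int n | i. i < n} = {1..<int n}"
      using F3a that by simp
    show ?thesis
    proof (rule set_eqI, rule iffI)
      fix x assume "x \<in> {(cols j ! i - cols j' ! i) mod int n | i. i < n}"
      then obtain i where i: "i < n" "x = (cols j ! i - cols j' ! i) mod int n" by blast
      have d: "(cols j' ! i - cols j ! i) mod int n \<in> {1..<int n}" using S i by blast
      have ne: "(cols j' ! i - cols j ! i) mod int n \<noteq> 0" using d by auto
      have "x = int n - (cols j' ! i - cols j ! i) mod int n"
        using negmod[OF npos ne] i(2) by simp
      then show "x \<in> {1..<int n}" using d by auto
    next
      fix x assume x: "x \<in> {1..<int n}"
      then have "int n - x \<in> {1..<int n}" by auto
      then obtain i where i: "i < n" "int n - x = (cols j' ! i - cols j ! i) mod int n"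
        using S by blast
      have ne: "(cols j' ! i - cols j ! i) mod int n \<noteq> 0" using i(2) x by auto
      have "(cols j ! i - cols j' ! i) mod int n = int n - (int n - x)"
        using negmod[OF npos ne] i(2) by simp
      then show "x \<in> {(cols j ! i - cols j' ! i) mod int n | i. i < n}"
        using i(1) by auto
    qed
  qed
  have Qin: "Q i j = cols j ! i" if "i < n" "j < 3" for i j
    using that by (simp add: Q_def mkQ_def)
  have Qz: "Q i j = 0" if "\<not> (i < n \<and> j < 3)" for i j
    using that unfolding Q_def mkQ_def by auto
  have DCA: "is_DCA 4 (n+1) n Q"
    unfolding is_DCA_def
  proof (intro conjI allI impI ballI)
    fix i j assume "i < n + 1" "j < (4::nat)"
    then show "Q i j \<in> {0..<int n}"
      using F1 Qin Qz npos by (cases "i < n \<and> j < 3") auto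
  next
    fix j j' :: nat and d :: int
    assume j: "j < 4" and j': "j' < 4" and jj: "j \<noteq> j'" and d: "d \<in> {0..<int n}"
    show "\<exists>i<n+1. (Q i j - Q i j') mod int n = d"
    proof (cases "d = 0")
      case True
      then show ?thesis using Qz[of n] by (intro exI[of _ n]) auto
    next
      case dnz: False
      show ?thesis
      proof (cases "j < 3 \<and> j' < 3")
        case True
        then have "d \<in> {(cols j ! i - cols j' ! i) mod int n | i. i < n}"
          using F3[of j j'] jj d dnz by auto
        then obtain i where "i < n" "d = (cols j ! i - cols j' ! i) mod int n" by blast
        then show ?thesis using True Qin by (intro exI[of _ i]) auto
      next
        case False
        then consider "j = 3" "j' < 3" | "j' = 3" "j < 3" using j j' jj by linarith
        then show ?thesis
        proof cases
          case 1
          have "int n - d \<in> {0..<int n}" using d dnz by auto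
          then obtain i where i: "i < n" "cols j' ! i = int n - d" using F2 1 by blast
          have "(Q i j - Q i j') mod int n = (d - int n) mod int n"
            using i 1 Qin Qz by simp
          also have "\<dots> = d" using d by simp
          finally show ?thesis using i by (intro exI[of _ i]) auto
        next
          case 2
          obtain i where i: "i < n" "cols j ! i = d" using F2 2 d by blast
          have "(Q i j - Q i j') mod int n = d mod int n" using i 2 Qin Qz by simp
          also have "\<dots> = d" using d by simp
          finally show ?thesis using i by (intro exI[of _ i]) auto
        qed
      qed
    qed
  qed
  have NORM: "DCA_normalized 4 n Q"
    unfolding DCA_normalized_def using Qz by auto
  have P1: "DCA_P1 4 n Q"
    unfolding DCA_P1_def
  proof (intro allI impI)
    fix j :: nat assume j: "j < 4"
    obtain i0 where i0: "i0 < n" "Q i0 j = 0"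
    proof (cases "j < 3")
      case True
      then obtain i where "i < n" "cols j ! i = 0" using F2[of j 0] npos by auto
      then show ?thesis using that Qin True by auto
    next
      case False
      then show ?thesis using that[of 0] Qz npos by auto
    qed
    have sub: "{i0, n} \<subseteq> {i. i < n + 1 \<and> Q i j = 0}" using i0 Qz by auto
    have "card {i0, n} = 2" using i0 by auto
    moreover have "card {i0, n} \<le> card {i. i < n + 1 \<and> Q i j = 0}"
      by (rule card_mono[OF _ sub]) auto
    ultimately show "2 \<le> card {i. i < n + 1 \<and> Q i j = 0}" by simp
  qed
  have P2: "DCA_P2 4 n Q"
    unfolding DCA_P2_def
  proof (intro allI impI)
    fix j j' :: nat
    assume j: "j < 4" and j': "j' < 4" and c: "j \<noteq> j' \<and> j \<noteq> 4 - 1 \<and> j' \<noteq> 4 - 1"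
    then have jj: "j < 3" "j' < 3" "j \<noteq> j'" by auto
    have eq: "(Q i j - Q i j') mod int n = (cols j ! i - cols j' ! i) mod int n" if "i < n" for i
      using Qin jj that by simp
    have "{(Q i j - Q i j') mod int n | i. i < n} = {(cols j ! i - cols j' ! i) mod int n | i. i < n}"
    proof (intro set_eqI iffI)
      fix x assume "x \<in> {(Q i j - Q i j') mod int n | i. i < n}"
      then obtain i where i: "i < n" "x = (Q i j - Q i j') mod int n" by blast
      then have "x = (cols j ! i - cols j' ! i) mod int n" using eq by simp
      with i(1) show "x \<in> {(cols j ! i - cols j' ! i) mod int n | i. i < n}" by blast
    next
      fix x assume "x \<in> {(cols j ! i - cols j' ! i) mod int n | i. i < n}"
      then obtain i where i: "i < n" "x = (cols j ! i - cols j' ! i) mod int n" by blast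
      then have "x = (Q i j - Q i j') mod int n" using eq by simp
      with i(1) show "x \<in> {(Q i j - Q i j') mod int n | i. i < n}" by blast
    qed
    then show "{(Q i j - Q i j') mod int n | i. i < n} = {1..<int n}" using F3[OF jj] by simp
  qed
  show ?thesis using DCA NORM P1 P2 unfolding Q_def by blast
qed

lemma from_checks:
  fixes a b c :: "int list"
  assumes "n \<ge> 2" "length a = n" "length b = n" "length c = n"
    "msort a = [0..int n - 1]" "msort b = [0..int n - 1]" "msort c = [0..int n - 1]"
    "remdups_adj (msort (map2 (\<lambda>x y. (x - y) mod int n) a b)) = [1..int n - 1]"
    "remdups_adj (msort (map2 (\<lambda>x y. (x - y) mod int n) a c)) = [1..int n - 1]"
    "remdups_adj (msort (map2 (\<lambda>x y. (x - y) mod int n) b c)) = [1..int n - 1]"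
  shows "\<exists>Q. is_DCA 4 (n+1) n Q \<and> DCA_normalized 4 n Q \<and> DCA_P1 4 n Q \<and> DCA_P2 4 n Q"
proof -
  define cols where "cols = (\<lambda>j::nat. if j = 0 then a else if j = 1 then b else c)"
  have j3: "j = 0 \<or> j = 1 \<or> j = 2" if "j < (3::nat)" for j using that by auto
  have e1: "{0..int n - 1} = {0..<int n}" by auto
  have e2: "{1..int n - 1} = {1..<int n}" by auto
  have sets: "set a = {0..<int n}" "set b = {0..<int n}" "set c = {0..<int n}"
    using assms(5-7) set_msort[of a] set_msort[of b] set_msort[of c] e1 by (metis set_upto)+
  have dsets:
    "set (map2 (\<lambda>x y. (x - y) mod int n) a b) = {1..<int n}"
    "set (map2 (\<lambda>x y. (x - y) mod int n) a c) = {1..<int n}"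
    "set (map2 (\<lambda>x y. (x - y) mod int n) b c) = {1..<int n}"
    using assms(8-10) e2 by (metis set_msort set_upto remdups_adj_set)+
  have "is_DCA 4 (n+1) n (mkQ n cols) \<and> DCA_normalized 4 n (mkQ n cols)
    \<and> DCA_P1 4 n (mkQ n cols) \<and> DCA_P2 4 n (mkQ n cols)"
  proof (rule abs_main)
    show "n \<ge> 2" by (rule assms(1))
    show "length (cols j) = n" if "j < 3" for j using j3[OF that] assms(2-4) by (auto simp: cols_def)
    show "set (cols j) = {0..<int n}" if "j < 3" for j using j3[OF that] sets by (auto simp: cols_def)
    show "set (map2 (\<lambda>x y. (x - y) mod int n) (cols j) (cols j')) = {1..<int n}"
      if "j < 3" "j' < 3" "j < j'" for j j'
    proof -
      have "(j = 0 \<and> j' = 1) \<or> (j = 0 \<and> j' = 2) \<or> (j = 1 \<and> j' = 2)" using that by auto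
      then show ?thesis using dsets by (auto simp: cols_def)
    qed
  qed
  then show ?thesis by blast
qed

definition A140 :: "int list" where
  "A140 = [70, 91, 112, 63, 49, 105, 56, 42, 98, 119, 77, 28, 14, 0, 21, 7, 133, 84, 35, 126, 120, 100, 60, 1, 121, 81, 22, 2, 102, 43, 23, 123, 64, 44, 4, 85, 65, 25, 106, 86, 46, 127, 107, 67, 8, 128, 88, 29, 9, 109, 50, 30, 130, 71, 51, 11, 92, 72, 32, 113, 93, 53, 134, 114, 74, 15, 135, 95, 36, 16, 116, 57, 37, 137, 78, 58, 18, 99, 79, 39, 80, 20, 40, 101, 41, 61, 122, 62, 82, 3, 83, 103, 24, 104, 124, 45, 125, 5, 66, 6, 26, 87, 27, 47, 108, 48, 68, 129, 69, 89, 10, 90, 110, 31, 111, 131, 52, 132, 12, 73, 13, 33, 94, 34, 54, 115, 55, 75, 136, 76, 96, 17, 97, 117, 38, 118, 138, 59, 139, 19]"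

definition B140 :: "int list" where
  "B140 = [35, 112, 84, 126, 28, 0, 42, 119, 56, 63, 91, 98, 70, 7, 14, 49, 21, 133, 105, 77, 23, 123, 43, 135, 95, 15, 104, 124, 24, 32, 92, 72, 67, 127, 107, 11, 71, 51, 52, 132, 12, 81, 1, 121, 129, 69, 89, 87, 27, 47, 118, 138, 38, 93, 53, 113, 97, 117, 17, 9, 109, 29, 79, 39, 99, 125, 5, 45, 34, 54, 94, 86, 46, 106, 122, 62, 82, 20, 40, 80, 88, 8, 128, 60, 120, 100, 57, 37, 137, 55, 75, 115, 61, 101, 41, 78, 58, 18, 26, 66, 6, 74, 134, 114, 139, 19, 59, 65, 25, 85, 90, 110, 10, 4, 64, 44, 76, 96, 136, 103, 3, 83, 111, 131, 31, 22, 2, 102, 68, 108, 48, 36, 16, 116, 33, 73, 13, 130, 50, 30]"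

definition C140 :: "int list" where
  "C140 = [105, 49, 28, 77, 126, 70, 84, 133, 42, 91, 7, 21, 35, 119, 63, 56, 0, 14, 98, 112, 53, 113, 93, 82, 122, 62, 9, 109, 29, 90, 110, 10, 13, 33, 73, 75, 115, 55, 114, 74, 134, 48, 68, 108, 2, 102, 22, 27, 47, 87, 61, 101, 41, 95, 15, 135, 89, 129, 69, 45, 125, 5, 116, 36, 16, 121, 81, 1, 58, 18, 78, 12, 52, 132, 96, 136, 76, 3, 83, 103, 20, 40, 80, 111, 131, 31, 138, 38, 118, 86, 46, 106, 100, 60, 120, 88, 8, 128, 43, 23, 123, 99, 79, 39, 117, 17, 97, 34, 54, 94, 44, 4, 64, 124, 24, 104, 51, 11, 71, 32, 92, 72, 19, 59, 139, 30, 130, 50, 127, 107, 67, 137, 57, 37, 6, 26, 66, 85, 65, 25]"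

lemma chk140_0: "length A140 = 140"
  by code_simp

lemma chk140_1: "length B140 = 140"
  by code_simp

lemma chk140_2: "length C140 = 140"
  by code_simp

lemma chk140_3: "msort A140 = [0..int 140 - 1]"
  by code_simp

lemma chk140_4: "msort B140 = [0..int 140 - 1]"
  by code_simp

lemma chk140_5: "msort C140 = [0..int 140 - 1]"
  by code_simp

lemma chk140_6: "remdups_adj (msort (map2 (\<lambda>x y. (x - y) mod int 140) A140 B140)) = [1..int 140 - 1]"
  by code_simp

lemma chk140_7: "remdups_adj (msort (map2 (\<lambda>x y. (x - y) mod int 140) A140 C140)) = [1..int 140 - 1]"
  by code_simp

lemma chk140_8: "remdups_adj (msort (map2 (\<lambda>x y. (x - y) mod int 140) B140 C140)) = [1..int 140 - 1]"
  by code_simp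

lemma ex140: "\<exists>Q. is_DCA 4 (140+1) 140 Q \<and> DCA_normalized 4 140 Q \<and> DCA_P1 4 140 Q \<and> DCA_P2 4 140 Q"
  by (rule from_checks[OF _ chk140_0 chk140_1 chk140_2 chk140_3 chk140_4 chk140_5 chk140_6 chk140_7 chk140_8]) simp

definition A196 :: "int list" where
  "A196 = [147, 56, 63, 21, 126, 84, 189, 105, 161, 70, 175, 133, 42, 49, 91, 0, 7, 112, 119, 77, 35, 14, 168, 28, 182, 140, 98, 154, 8, 36, 64, 92, 120, 148, 176, 16, 72, 128, 184, 44, 100, 156, 4, 116, 32, 144, 60, 172, 88, 1, 29, 57, 85, 113, 141, 169, 9, 65, 121, 177, 37, 93, 149, 25, 137, 53, 165, 81, 193, 109, 22, 50, 78, 106, 134, 162, 190, 2, 58, 114, 170, 30, 86, 142, 18, 130, 46, 158, 74, 186, 102, 15, 43, 71, 99, 127, 155, 183, 23, 79, 135, 191, 51, 107, 163, 11, 123, 39, 151, 67, 179, 95, 24, 108, 192, 80, 164, 52, 136, 20, 188, 160, 132, 104, 76, 48, 12, 152, 96, 40, 180, 124, 68, 17, 101, 185, 73, 157, 45, 129, 13, 181, 153, 125, 97, 69, 41, 5, 145, 89, 33, 173, 117, 61, 10, 94, 178, 66, 150, 38, 122, 6, 174, 146, 118, 90, 62, 34, 26, 166, 110, 54, 194, 138, 82, 3, 87, 171, 59, 143, 31, 115, 27, 195, 167, 139, 111, 83, 55, 19, 159, 103, 47, 187, 131, 75]"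

definition B196 :: "int list" where
  "B196 = [0, 161, 175, 91, 105, 168, 133, 77, 42, 56, 21, 84, 98, 14, 189, 7, 70, 35, 49, 112, 28, 147, 63, 126, 140, 154, 119, 182, 5, 145, 89, 33, 173, 117, 61, 17, 101, 185, 73, 157, 45, 129, 13, 181, 153, 125, 97, 69, 41, 9, 65, 121, 177, 37, 93, 149, 25, 137, 53, 165, 81, 193, 109, 1, 29, 57, 85, 113, 141, 169, 4, 116, 32, 144, 60, 172, 88, 8, 36, 64, 92, 120, 148, 176, 16, 72, 128, 184, 44, 100, 156, 20, 188, 160, 132, 104, 76, 48, 12, 152, 96, 40, 180, 124, 68, 24, 108, 192, 80, 164, 52, 136, 11, 123, 39, 151, 67, 179, 95, 15, 43, 71, 99, 127, 155, 183, 23, 79, 135, 191, 51, 107, 163, 19, 159, 103, 47, 187, 131, 75, 3, 87, 171, 59, 143, 31, 115, 27, 195, 167, 139, 111, 83, 55, 22, 50, 78, 106, 134, 162, 190, 2, 58, 114, 170, 30, 86, 142, 18, 130, 46, 158, 74, 186, 102, 6, 174, 146, 118, 90, 62, 34, 26, 166, 110, 54, 194, 138, 82, 10, 94, 178, 66, 150, 38, 122]"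

definition C196 :: "int list" where
  "C196 = [49, 140, 35, 77, 168, 112, 56, 42, 84, 28, 119, 14, 7, 147, 0, 91, 182, 126, 70, 63, 105, 21, 161, 154, 98, 189, 133, 175, 6, 174, 146, 118, 90, 62, 34, 26, 166, 110, 54, 194, 138, 82, 10, 94, 178, 66, 150, 38, 122, 24, 108, 192, 80, 164, 52, 136, 20, 188, 160, 132, 104, 76, 48, 12, 152, 96, 40, 180, 124, 68, 23, 79, 135, 191, 51, 107, 163, 11, 123, 39, 151, 67, 179, 95, 15, 43, 71, 99, 127, 155, 183, 9, 65, 121, 177, 37, 93, 149, 25, 137, 53, 165, 81, 193, 109, 1, 29, 57, 85, 113, 141, 169, 27, 195, 167, 139, 111, 83, 55, 19, 159, 103, 47, 187, 131, 75, 3, 87, 171, 59, 143, 31, 115, 13, 181, 153, 125, 97, 69, 41, 5, 145, 89, 33, 173, 117, 61, 17, 101, 185, 73, 157, 45, 129, 18, 130, 46, 158, 74, 186, 102, 22, 50, 78, 106, 134, 162, 190, 2, 58, 114, 170, 30, 86, 142, 16, 72, 128, 184, 44, 100, 156, 4, 116, 32, 144, 60, 172, 88, 8, 36, 64, 92, 120, 148, 176]"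

lemma chk196_0: "length A196 = 196"
  by code_simp

lemma chk196_1: "length B196 = 196"
  by code_simp

lemma chk196_2: "length C196 = 196"
  by code_simp

lemma chk196_3: "msort A196 = [0..int 196 - 1]"
  by code_simp

lemma chk196_4: "msort B196 = [0..int 196 - 1]"
  by code_simp

lemma chk196_5: "msort C196 = [0..int 196 - 1]"
  by code_simp

lemma chk196_6: "remdups_adj (msort (map2 (\<lambda>x y. (x - y) mod int 196) A196 B196)) = [1..int 196 - 1]"
  by code_simp

lemma chk196_7: "remdups_adj (msort (map2 (\<lambda>x y. (x - y) mod int 196) A196 C196)) = [1..int 196 - 1]"
  by code_simp

lemma chk196_8: "remdups_adj (msort (map2 (\<lambda>x y. (x - y) mod int 196) B196 C196)) = [1..int 196 - 1]"
  by code_simp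

lemma ex196: "\<exists>Q. is_DCA 4 (196+1) 196 Q \<and> DCA_normalized 4 196 Q \<and> DCA_P1 4 196 Q \<and> DCA_P2 4 196 Q"
  by (rule from_checks[OF _ chk196_0 chk196_1 chk196_2 chk196_3 chk196_4 chk196_5 chk196_6 chk196_7 chk196_8]) simp

definition A220 :: "int list" where
  "A220 = [110, 11, 132, 143, 209, 165, 176, 22, 198, 99, 77, 88, 154, 0, 121, 187, 33, 44, 55, 66, 100, 80, 20, 60, 180, 1, 201, 141, 181, 81, 122, 102, 42, 82, 202, 23, 3, 163, 203, 103, 144, 124, 64, 104, 4, 45, 25, 185, 5, 125, 166, 146, 86, 126, 26, 67, 47, 207, 27, 147, 188, 168, 108, 148, 48, 89, 69, 9, 49, 169, 210, 190, 130, 170, 70, 111, 91, 31, 71, 191, 12, 212, 152, 192, 92, 133, 113, 53, 93, 213, 34, 14, 174, 214, 114, 155, 135, 75, 115, 15, 56, 36, 196, 16, 136, 177, 157, 97, 137, 37, 78, 58, 218, 38, 158, 199, 179, 119, 159, 59, 200, 160, 40, 120, 140, 101, 61, 161, 21, 41, 2, 182, 62, 142, 162, 123, 83, 183, 43, 63, 24, 204, 84, 164, 184, 145, 105, 205, 65, 85, 46, 6, 106, 186, 206, 167, 127, 7, 87, 107, 68, 28, 128, 208, 8, 189, 149, 29, 109, 129, 90, 50, 150, 10, 30, 211, 171, 51, 131, 151, 112, 72, 172, 32, 52, 13, 193, 73, 153, 173, 134, 94, 194, 54, 74, 35, 215, 95, 175, 195, 156, 116, 216, 76, 96, 57, 17,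 117, 197, 217, 178, 138, 18, 98, 118, 79, 39, 139, 219, 19]"

definition B220 :: "int list" where
  "B220 = [55, 132, 44, 66, 88, 0, 22, 99, 176, 143, 11, 198, 110, 187, 154, 209, 121, 33, 165, 77, 20, 60, 180, 100, 80, 37, 177, 157, 97, 137, 106, 186, 206, 46, 6, 54, 74, 134, 94, 194, 119, 159, 59, 199, 179, 28, 128, 208, 8, 68, 115, 15, 155, 135, 75, 185, 5, 125, 45, 25, 51, 131, 151, 211, 171, 39, 139, 219, 19, 79, 158, 78, 58, 218, 38, 92, 12, 212, 152, 192, 9, 49, 169, 89, 69, 200, 160, 40, 120, 140, 184, 24, 204, 84, 164, 96, 156, 116, 216, 76, 141, 181, 81, 1, 201, 32, 52, 112, 72, 172, 7, 87, 107, 167, 127, 118, 178, 138, 18, 98, 34, 14, 174, 214, 114, 73, 153, 173, 13, 193, 195, 35, 215, 95, 175, 61, 161, 21, 41, 101, 83, 183, 43, 63, 123, 47, 207, 27, 147, 67, 108, 148, 48, 188, 168, 53, 93, 213, 133, 113, 102, 42, 82, 202, 122, 56, 36, 196, 16, 136, 50, 150, 10, 30, 90, 17, 117, 197, 217, 57, 205, 65, 85, 145, 105, 190, 130, 170, 70, 210, 166, 146, 86, 126, 26, 191, 111, 91, 31, 71, 4, 144, 124, 64, 104, 62, 142, 162, 2, 182, 109, 129, 189, 149, 29, 203, 103, 23, 3, 163]"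

definition C220 :: "int list" where
  "C220 = [165, 209, 88, 77, 66, 110, 44, 33, 22, 11, 187, 121, 55, 99, 143, 176, 0, 154, 198, 132, 116, 216, 76, 96, 156, 182, 62, 142, 162, 2, 9, 49, 169, 89, 69, 196, 16, 136, 56, 36, 10, 30, 90, 50, 150, 159, 59, 199, 179, 119, 185, 5, 125, 45, 25, 171, 51, 131, 151, 211, 60, 180, 100, 80, 20, 194, 54, 74, 134, 94, 208, 8, 68, 28, 128, 214, 114, 34, 14, 174, 101, 61, 161, 21, 41, 113, 53, 93, 213, 133, 71, 191, 111, 91, 31, 29, 109, 129, 189, 149, 146, 86, 126, 26, 166, 212, 152, 192, 92, 12, 203, 103, 23, 3, 163, 95, 175, 195, 35, 215, 37, 177, 157, 97, 137, 147, 67, 47, 207, 27, 193, 73, 153, 173, 13, 15, 155, 135, 75, 115, 124, 64, 104, 4, 144, 204, 84, 164, 184, 24, 87, 107, 167, 127, 7, 82, 202, 122, 102, 42, 170, 70, 210, 190, 130, 140, 200, 160, 40, 120, 218, 38, 158, 78, 58, 18, 98, 118, 178, 138, 105, 205, 65, 85, 145, 217, 57, 17, 117, 197, 32, 52, 112, 72, 172, 83, 183, 43, 63, 123, 219, 19, 79, 39, 139, 186, 206, 46, 6, 106, 148, 48, 188, 168, 108, 81, 1, 201, 141, 181]"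

lemma chk220_0: "length A220 = 220"
  by code_simp

lemma chk220_1: "length B220 = 220"
  by code_simp

lemma chk220_2: "length C220 = 220"
  by code_simp

lemma chk220_3: "msort A220 = [0..int 220 - 1]"
  by code_simp

lemma chk220_4: "msort B220 = [0..int 220 - 1]"
  by code_simp

lemma chk220_5: "msort C220 = [0..int 220 - 1]"
  by code_simp

lemma chk220_6: "remdups_adj (msort (map2 (\<lambda>x y. (x - y) mod int 220) A220 B220)) = [1..int 220 - 1]"
  by code_simp

lemma chk220_7: "remdups_adj (msort (map2 (\<lambda>x y. (x - y) mod int 220) A220 C220)) = [1..int 220 - 1]"
  by code_simp

lemma chk220_8: "remdups_adj (msort (map2 (\<lambda>x y. (x - y) mod int 220) B220 C220)) = [1..int 220 - 1]"
  by code_simp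

lemma ex220: "\<exists>Q. is_DCA 4 (220+1) 220 Q \<and> DCA_normalized 4 220 Q \<and> DCA_P1 4 220 Q \<and> DCA_P2 4 220 Q"
  by (rule from_checks[OF _ chk220_0 chk220_1 chk220_2 chk220_3 chk220_4 chk220_5 chk220_6 chk220_7 chk220_8]) simp

definition A260 :: "int list" where
  "A260 = [130, 91, 52, 143, 169, 65, 156, 182, 78, 39, 117, 208, 234, 0, 221, 247, 13, 104, 195, 26, 40, 160, 120, 220, 100, 140, 1, 121, 81, 181, 61, 101, 222, 82, 42, 142, 22, 62, 183, 43, 3, 103, 243, 23, 144, 4, 224, 64, 204, 244, 105, 225, 185, 25, 165, 205, 66, 186, 146, 246, 126, 166, 27, 147, 107, 207, 87, 127, 248, 108, 68, 168, 48, 88, 209, 69, 29, 129, 9, 49, 170, 30, 250, 90, 230, 10, 131, 251, 211, 51, 191, 231, 92, 212, 172, 12, 152, 192, 53, 173, 133, 233, 113, 153, 14, 134, 94, 194, 74, 114, 235, 95, 55, 155, 35, 75, 196, 56, 16, 116, 256, 36, 157, 17, 237, 77, 217, 257, 118, 238, 198, 38, 178, 218, 79, 199, 159, 259, 139, 179, 80, 60, 240, 180, 200, 20, 41, 21, 201, 141, 161, 241, 2, 242, 162, 102, 122, 202, 223, 203, 123, 63, 83, 163, 184, 164, 84, 24, 44, 124, 145, 125, 45, 245, 5, 85, 106, 86, 6, 206, 226, 46, 67, 47, 227, 167, 187, 7, 28, 8, 188, 128, 148, 228, 249, 229, 149, 89, 109, 189, 210, 190, 110, 50, 70, 150, 171,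 151, 71, 11, 31, 111, 132, 112, 32, 232, 252, 72, 93, 73, 253, 193, 213, 33, 54, 34, 214, 154, 174, 254, 15, 255, 175, 115, 135, 215, 236, 216, 136, 76, 96, 176, 197, 177, 97, 37, 57, 137, 158, 138, 58, 258, 18, 98, 119, 99, 19, 219, 239, 59]"

definition B260 :: "int list" where
  "B260 = [195, 52, 104, 26, 208, 0, 182, 39, 156, 143, 91, 78, 130, 247, 234, 169, 221, 13, 65, 117, 249, 229, 149, 89, 109, 189, 194, 74, 114, 14, 134, 94, 226, 46, 106, 86, 6, 206, 133, 233, 113, 153, 53, 173, 212, 172, 12, 152, 192, 92, 32, 232, 252, 72, 132, 112, 17, 237, 77, 217, 257, 157, 3, 103, 243, 23, 183, 43, 126, 166, 66, 186, 146, 246, 191, 231, 131, 251, 211, 51, 71, 11, 31, 111, 171, 151, 215, 15, 255, 175, 115, 135, 227, 167, 187, 7, 67, 47, 5, 85, 145, 125, 45, 245, 68, 168, 48, 88, 248, 108, 102, 122, 202, 2, 242, 162, 8, 188, 128, 148, 228, 28, 147, 107, 207, 87, 127, 27, 140, 40, 160, 120, 220, 100, 4, 224, 64, 204, 244, 144, 137, 197, 177, 97, 37, 57, 174, 254, 54, 34, 214, 154, 180, 200, 20, 80, 60, 240, 142, 22, 62, 222, 82, 42, 181, 61, 101, 1, 121, 81, 30, 250, 90, 230, 10, 170, 49, 209, 69, 29, 129, 9, 56, 16, 116, 256, 36, 196, 123, 63, 83, 163, 223, 203, 105, 225, 185, 25, 165, 205, 21, 201, 141, 161, 241, 41, 199,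 159, 259, 139, 179, 79, 18, 98, 158, 138, 58, 258, 76, 96, 176, 236, 216, 136, 73, 253, 193, 213, 33, 93, 235, 95, 55, 155, 35, 75, 110, 50, 70, 150, 210, 190, 118, 238, 198, 38, 178, 218, 164, 84, 24, 44, 124, 184, 59, 119, 99, 19, 219, 239]"

definition C260 :: "int list" where
  "C260 = [65, 169, 208, 117, 26, 130, 104, 13, 182, 91, 247, 221, 195, 39, 143, 156, 0, 234, 78, 52, 84, 24, 44, 124, 184, 164, 21, 201, 141, 161, 241, 41, 177, 97, 37, 57, 137, 197, 202, 2, 242, 162, 102, 122, 214, 154, 174, 254, 54, 34, 42, 142, 22, 62, 222, 82, 98, 158, 138, 58, 258, 18, 67, 47, 227, 167, 187, 7, 114, 14, 134, 94, 194, 74, 70, 150, 210, 190, 110, 50, 204, 244, 144, 4, 224, 64, 80, 60, 240, 180, 200, 20, 108, 68, 168, 48, 88, 248, 29, 129, 9, 49, 209, 69, 35, 75, 235, 95, 55, 155, 8, 188, 128, 148, 228, 28, 19, 219, 239, 59, 119, 99, 126, 166, 66, 186, 146, 246, 85, 145, 125, 45, 245, 5, 101, 1, 121, 81, 181, 61, 183, 43, 3, 103, 243, 23, 152, 192, 92, 212, 172, 12, 32, 232, 252, 72, 132, 112, 136, 76, 96, 176, 236, 216, 109, 189, 249, 229, 149, 89, 113, 153, 53, 173, 133, 233, 63, 83, 163, 223, 203, 123, 165, 205, 105, 225, 185, 25, 226, 46, 106, 86, 6, 206, 215, 15, 255, 175, 115, 135, 77, 217, 257, 157, 17, 237, 259,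 139, 179, 79, 199, 159, 16, 116, 256, 36, 196, 56, 218, 118, 238, 198, 38, 178, 213, 33, 93, 73, 253, 193, 90, 230, 10, 170, 30, 250, 107, 207, 87, 127, 27, 147, 211, 51, 191, 231, 131, 251, 140, 40, 160, 120, 220, 100, 11, 31, 111, 171, 151, 71]"

lemma chk260_0: "length A260 = 260"
  by code_simp

lemma chk260_1: "length B260 = 260"
  by code_simp

lemma chk260_2: "length C260 = 260"
  by code_simp

lemma chk260_3: "msort A260 = [0..int 260 - 1]"
  by code_simp

lemma chk260_4: "msort B260 = [0..int 260 - 1]"
  by code_simp

lemma chk260_5: "msort C260 = [0..int 260 - 1]"
  by code_simp

lemma chk260_6: "remdups_adj (msort (map2 (\<lambda>x y. (x - y) mod int 260) A260 B260)) = [1..int 260 - 1]"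
  by code_simp

lemma chk260_7: "remdups_adj (msort (map2 (\<lambda>x y. (x - y) mod int 260) A260 C260)) = [1..int 260 - 1]"
  by code_simp

lemma chk260_8: "remdups_adj (msort (map2 (\<lambda>x y. (x - y) mod int 260) B260 C260)) = [1..int 260 - 1]"
  by code_simp

lemma ex260: "\<exists>Q. is_DCA 4 (260+1) 260 Q \<and> DCA_normalized 4 260 Q \<and> DCA_P1 4 260 Q \<and> DCA_P2 4 260 Q"
  by (rule from_checks[OF _ chk260_0 chk260_1 chk260_2 chk260_3 chk260_4 chk260_5 chk260_6 chk260_7 chk260_8]) simp

definition A308 :: "int list" where
  "A308 = [77, 176, 121, 143, 242, 264, 55, 99, 275, 66, 165, 187, 286, 231, 209, 0, 253, 44, 297, 11, 33, 198, 220, 88, 110, 132, 154, 22, 56, 168, 196, 280, 224, 1, 113, 141, 225, 169, 254, 58, 86, 170, 114, 199, 3, 31, 115, 59, 144, 256, 284, 60, 4, 89, 201, 229, 5, 257, 34, 146, 174, 258, 202, 287, 91, 119, 203, 147, 232, 36, 64, 148, 92, 177, 289, 9, 93, 37, 122, 234, 262, 38, 290, 67, 179, 207, 291, 235, 12, 124, 152, 236, 180, 265, 69, 97, 181, 125, 210, 14, 42, 126, 70, 155, 267, 295, 71, 15, 100, 212, 240, 16, 268, 45, 157, 185, 269, 213, 298, 102, 130, 214, 158, 243, 47, 75, 159, 103, 188, 300, 20, 104, 48, 133, 245, 273, 49, 301, 78, 190, 218, 302, 246, 23, 135, 163, 247, 191, 276, 80, 108, 192, 136, 221, 25, 53, 137,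 81, 166, 278, 306, 82, 26, 111, 223, 251, 27, 279, 112, 28, 84, 252, 140, 57, 281, 29, 197, 85, 2, 226, 282, 142, 30, 255, 171, 227, 87, 283, 200, 116, 172, 32, 228, 145, 61, 117, 285, 173, 90, 6, 62, 230, 118, 35, 259, 7, 175, 63, 288, 204, 260, 120, 8, 233, 149, 205, 65, 261, 178, 94, 150, 10, 206, 123, 39, 95, 263, 151, 68, 292, 40, 208, 96, 13, 237, 293, 153, 41, 266, 182, 238, 98, 294, 211, 127, 183, 43, 239, 156, 72, 128, 296, 184, 101, 17, 73, 241, 129, 46, 270, 18, 186, 74, 299, 215, 271, 131, 19, 244, 160, 216, 76, 272, 189, 105, 161, 21, 217, 134, 50, 106, 274, 162, 79, 303, 51, 219, 107, 24, 248, 304, 164, 52, 277, 193, 249, 109, 305, 222, 138, 194, 54, 250, 167, 83, 139, 307, 195]"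

definition B308 :: "int list" where
  "B308 = [0, 275, 165, 209, 99, 220, 187, 11, 286, 176, 143, 264, 154, 198, 55, 253, 66, 33, 231, 44, 88, 77, 121, 242, 132, 22, 297, 110, 9, 93, 37, 177, 289, 72, 128, 296, 184, 156, 250, 222, 138, 194, 54, 20, 104, 48, 188, 300, 136, 276, 80, 108, 192, 258, 202, 34, 146, 174, 50, 106, 274, 162, 134, 140, 112, 28, 84, 252, 49, 301, 133, 245, 273, 17, 73, 241, 129, 101, 119, 203, 147, 287, 91, 62, 230, 118, 90, 6, 130, 214, 158, 298, 102, 268, 100, 212, 240, 16, 195, 167, 83, 139, 307, 294, 266, 182, 238, 98, 284, 60, 4, 144, 256, 236, 180, 12, 124, 152, 8, 288, 204, 260, 120, 26, 166, 278, 306, 82, 225, 169, 1, 113, 141, 269, 213, 45, 157, 185, 24, 248, 304, 164, 52, 246, 78, 190, 218, 302, 127, 183, 43, 239, 211, 247, 191, 23, 135, 163, 234, 262, 38, 290, 122, 97, 181, 125, 265, 69, 254, 58, 86, 170, 114, 197, 85, 57, 281, 29, 285, 173, 145, 61, 117, 32, 228, 200, 116, 172, 207, 291, 235, 67, 179, 223, 251, 27, 279, 111, 292, 40, 208, 96, 68, 168, 196, 280, 224, 56, 215, 271, 131, 19, 299, 293, 153, 41, 13, 237, 155, 267, 295, 71, 15, 39, 95, 263, 151, 123, 149, 205, 65, 261, 233, 51, 219, 107, 79, 303, 3, 31, 115, 59, 199, 142, 30, 2, 226, 282, 76, 272, 244, 160, 216, 305, 277, 193, 249, 109, 206, 178,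 94, 150, 10, 171, 227, 87, 283, 255, 25, 53, 137, 81, 221, 259, 7, 175, 63, 35, 89, 201, 229, 5, 257, 217, 189, 105, 161, 21, 126, 70, 210, 14, 42, 103, 243, 47, 75, 159, 64, 148, 92, 232, 36, 186, 74, 46, 270, 18]"

definition C308 :: "int list" where
  "C308 = [231, 132, 33, 11, 220, 44, 176, 286, 264, 88, 297, 198, 253, 77, 0, 209, 110, 242, 66, 121, 99, 143, 275, 22, 154, 55, 187, 165, 114, 254, 58, 86, 170, 80, 108, 192, 136, 276, 193, 249, 109, 305, 277, 124, 152, 236, 180, 12, 150, 10, 206, 178, 94, 131, 19, 299, 215, 271, 186, 74, 46, 270, 18, 17, 73, 241, 129, 101, 252, 140, 112, 28, 84, 20, 104, 48, 188, 300, 190, 218, 302, 246, 78, 158, 298, 102, 130, 214, 15, 155, 267, 295, 71, 171, 227, 87, 283, 255, 43, 239, 211, 127, 183, 233, 149, 205, 65, 261, 301, 133, 245, 273, 49, 212, 240, 16, 268, 100, 306, 82, 26, 166, 278, 250, 222, 138, 194, 54, 30, 2, 226, 282, 142, 179, 207, 291, 235, 67, 203, 147, 287, 91, 119, 274, 162, 134, 50, 106, 153, 41, 13, 237, 293, 42, 126, 70, 210, 14, 79, 303, 51, 219, 107, 83, 139, 307, 195, 167, 32, 228, 200, 116, 172, 34, 146, 174, 258, 202, 31, 115, 59, 199, 3, 238, 98, 294, 266, 182, 292, 40, 208, 96, 68, 52, 24, 248, 304, 164, 8, 288, 204, 260, 120, 61, 117, 285, 173, 145, 217, 189, 105, 161,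 21, 23, 135, 163, 247, 191, 63, 35, 259, 7, 175, 4, 144, 256, 284, 60, 280, 224, 56, 168, 196, 151, 123, 39, 95, 263, 38, 290, 122, 234, 262, 148, 92, 232, 36, 64, 243, 47, 75, 159, 103, 9, 93, 37, 177, 289, 5, 257, 89, 201, 229, 118, 90, 6, 62, 230, 225, 169, 1, 113, 141, 25, 53, 137, 81, 221, 184, 156, 72, 128, 296, 281, 29, 197, 85, 57, 272, 244, 160, 216, 76, 265, 69, 97, 181, 125, 157, 185, 269, 213, 45, 251, 27, 279, 111, 223]"

lemma chk308_0: "length A308 = 308"
  by code_simp

lemma chk308_1: "length B308 = 308"
  by code_simp

lemma chk308_2: "length C308 = 308"
  by code_simp

lemma chk308_3: "msort A308 = [0..int 308 - 1]"
  by code_simp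

lemma chk308_4: "msort B308 = [0..int 308 - 1]"
  by code_simp

lemma chk308_5: "msort C308 = [0..int 308 - 1]"
  by code_simp

lemma chk308_6: "remdups_adj (msort (map2 (\<lambda>x y. (x - y) mod int 308) A308 B308)) = [1..int 308 - 1]"
  by code_simp

lemma chk308_7: "remdups_adj (msort (map2 (\<lambda>x y. (x - y) mod int 308) A308 C308)) = [1..int 308 - 1]"
  by code_simp

lemma chk308_8: "remdups_adj (msort (map2 (\<lambda>x y. (x - y) mod int 308) B308 C308)) = [1..int 308 - 1]"
  by code_simp

lemma ex308: "\<exists>Q. is_DCA 4 (308+1) 308 Q \<and> DCA_normalized 4 308 Q \<and> DCA_P1 4 308 Q \<and> DCA_P2 4 308 Q"
  by (rule from_checks[OF _ chk308_0 chk308_1 chk308_2 chk308_3 chk308_4 chk308_5 chk308_6 chk308_7 chk308_8]) simp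

definition A340 :: "int list" where
  "A340 = [170, 51, 272, 323, 289, 85, 136, 102, 238, 119, 17, 68, 34, 0, 221, 187, 153, 204, 255, 306, 120, 240, 140, 280, 220, 100, 200, 60, 1, 121, 21, 161, 101, 321, 81, 281, 222, 2, 242, 42, 322, 202, 302, 162, 103, 223, 123, 263, 203, 83, 183, 43, 324, 104, 4, 144, 84, 304, 64, 264, 205, 325, 225, 25, 305, 185, 285, 145, 86, 206, 106, 246, 186, 66, 166, 26, 307, 87, 327, 127, 67, 287, 47, 247, 188, 308, 208, 8, 288, 168, 268, 128, 69, 189, 89, 229, 169, 49, 149, 9, 290, 70, 310, 110, 50, 270, 30, 230, 171, 291, 191, 331, 271, 151, 251, 111, 52, 172, 72, 212, 152, 32, 132, 332, 273, 53, 293, 93, 33, 253, 13, 213, 154, 274, 174, 314, 254, 134, 234, 94, 35, 155, 55, 195, 135, 15, 115, 315, 256, 36, 276, 76, 16, 236, 336, 196, 137, 257, 157, 297, 237, 117, 217, 77, 18, 138, 38, 178, 118, 338, 98, 298, 239, 19, 259, 59, 339, 219, 319, 179, 20, 40, 80, 160, 320, 300, 260, 180, 241, 261, 301, 41, 201, 181, 141, 61, 122, 142, 182, 262, 82, 62, 22, 282, 3, 23, 63, 143, 303, 283, 243, 163, 224, 244, 284, 24, 184, 164, 124, 44, 105, 125, 165, 245, 65, 45, 5, 265, 326, 6, 46, 126, 286, 266, 226, 146, 207, 227, 267, 7, 167, 147, 107, 27, 88, 108, 148, 228, 48, 28, 328, 248, 309, 329, 29, 109, 269, 249, 209, 129,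 190, 210, 250, 330, 150, 130, 90, 10, 71, 91, 131, 211, 31, 11, 311, 231, 292, 312, 12, 92, 252, 232, 192, 112, 173, 193, 233, 313, 133, 113, 73, 333, 54, 74, 114, 194, 14, 334, 294, 214, 275, 295, 335, 75, 235, 215, 175, 95, 156, 176, 216, 296, 116, 96, 56, 316, 37, 57, 97, 177, 337, 317, 277, 197, 258, 278, 318, 58, 218, 198, 158, 78, 139, 159, 199, 279, 99, 79, 39, 299]"

definition B340 :: "int list" where
  "B340 = [255, 272, 204, 306, 68, 0, 102, 119, 136, 323, 51, 238, 170, 187, 34, 289, 221, 153, 85, 17, 11, 311, 231, 71, 91, 131, 211, 31, 299, 139, 159, 199, 279, 99, 79, 39, 148, 228, 48, 28, 328, 248, 88, 108, 152, 32, 132, 332, 52, 172, 72, 212, 309, 329, 29, 109, 269, 249, 209, 129, 93, 33, 253, 13, 213, 273, 53, 293, 267, 7, 167, 147, 107, 27, 207, 227, 114, 194, 14, 334, 294, 214, 54, 74, 165, 245, 65, 45, 5, 265, 105, 125, 81, 281, 1, 121, 21, 161, 101, 321, 100, 200, 60, 120, 240, 140, 280, 220, 126, 286, 266, 226, 146, 326, 6, 46, 314, 254, 134, 234, 94, 154, 274, 174, 236, 336, 196, 256, 36, 276, 76, 16, 124, 44, 224, 244, 284, 24, 184, 164, 300, 260, 180, 20, 40, 80, 160, 320, 37, 57, 97, 177, 337, 317, 277, 197, 191, 331, 271, 151, 251, 111, 171, 291, 150, 130, 90, 10, 190, 210, 250, 330, 195, 135, 15, 115, 315, 35, 155, 55,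 219, 319, 179, 239, 19, 259, 59, 339, 143, 303, 283, 243, 163, 3, 23, 63, 198, 158, 78, 258, 278, 318, 58, 218, 183, 43, 103, 223, 123, 263, 203, 83, 128, 188, 308, 208, 8, 288, 168, 268, 69, 189, 89, 229, 169, 49, 149, 9, 295, 335, 75, 235, 215, 175, 95, 275, 324, 104, 4, 144, 84, 304, 64, 264, 201, 181, 141, 61, 241, 261, 301, 41, 322, 202, 302, 162, 222, 2, 242, 42, 257, 157, 297, 237, 117, 217, 77, 137, 70, 310, 110, 50, 270, 30, 230, 290, 118, 338, 98, 298, 18, 138, 38, 178, 87, 327, 127, 67, 287, 47, 247, 307, 325, 225, 25, 305, 185, 285, 145, 205, 193, 233, 313, 133, 113, 73, 333, 173, 296, 116, 96, 56, 316, 156, 176, 216, 92, 252, 232, 192, 112, 292, 312, 12, 186, 66, 166, 26, 86, 206, 106, 246, 182, 262, 82, 62, 22, 282, 122, 142]"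

definition C340 :: "int list" where
  "C340 = [85, 289, 68, 17, 306, 170, 204, 153, 102, 51, 187, 221, 255, 119, 323, 136, 0, 34, 238, 272, 7, 167, 147, 107, 27, 207, 227, 267, 258, 278, 318, 58, 218, 198, 158, 78, 60, 120, 240, 140, 280, 220, 100, 200, 142, 182, 262, 82, 62, 22, 282, 122, 12, 92, 252, 232, 192, 112, 292, 312, 194, 14, 334, 294, 214, 54, 74, 114, 149, 9, 69, 189, 89, 229, 169, 49, 203, 83, 183, 43, 103, 223, 123, 263, 108, 148, 228, 48, 28, 328, 248, 88, 293, 93, 33, 253, 13, 213, 273, 53, 184, 164, 124, 44, 224, 244, 284, 24, 332, 52, 172, 72, 212, 152, 32, 132, 155, 55, 195, 135, 15, 115, 315, 35, 260, 180, 20, 40, 80, 160, 320, 300, 299, 139, 159, 199, 279, 99, 79, 39, 230, 290, 70, 310, 110, 50, 270, 30, 42, 322, 202, 302, 162, 222, 2, 242, 29, 109, 269, 249, 209, 129, 309, 329, 8, 288, 168, 268, 128, 188, 308, 208, 321, 81, 281, 1, 121, 21, 161, 101, 19, 259, 59, 339, 219, 319, 179, 239, 297, 237, 117, 217, 77, 137, 257, 157, 335, 75, 235, 215, 175, 95, 275, 295, 11, 311, 231, 71, 91, 131, 211, 31, 216, 296, 116, 96, 56, 316, 156, 176, 165, 245, 65, 45, 5, 265, 105, 125, 97, 177, 337, 317, 277, 197, 37, 57, 144, 84, 304, 64, 264, 324, 104, 4, 330, 150, 130, 90, 10, 190, 210, 250, 127, 67, 287, 47, 247, 307, 87, 327,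 256, 36, 276, 76, 16, 236, 336, 196, 301, 41, 201, 181, 141, 61, 241, 261, 25, 305, 185, 285, 145, 205, 325, 225, 234, 94, 154, 274, 174, 314, 254, 134, 18, 138, 38, 178, 118, 338, 98, 298, 26, 86, 206, 106, 246, 186, 66, 166, 331, 271, 151, 251, 111, 171, 291, 191, 46, 126, 286, 266, 226, 146, 326, 6, 23, 63, 143, 303, 283, 243, 163, 3, 133, 113, 73, 333, 173, 193, 233, 313]"

lemma chk340_0: "length A340 = 340"
  by code_simp

lemma chk340_1: "length B340 = 340"
  by code_simp

lemma chk340_2: "length C340 = 340"
  by code_simp

lemma chk340_3: "msort A340 = [0..int 340 - 1]"
  by code_simp

lemma chk340_4: "msort B340 = [0..int 340 - 1]"
  by code_simp

lemma chk340_5: "msort C340 = [0..int 340 - 1]"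
  by code_simp

lemma chk340_6: "remdups_adj (msort (map2 (\<lambda>x y. (x - y) mod int 340) A340 B340)) = [1..int 340 - 1]"
  by code_simp

lemma chk340_7: "remdups_adj (msort (map2 (\<lambda>x y. (x - y) mod int 340) A340 C340)) = [1..int 340 - 1]"
  by code_simp

lemma chk340_8: "remdups_adj (msort (map2 (\<lambda>x y. (x - y) mod int 340) B340 C340)) = [1..int 340 - 1]"
  by code_simp

lemma ex340: "\<exists>Q. is_DCA 4 (340+1) 340 Q \<and> DCA_normalized 4 340 Q \<and> DCA_P1 4 340 Q \<and> DCA_P2 4 340 Q"
  by (rule from_checks[OF _ chk340_0 chk340_1 chk340_2 chk340_3 chk340_4 chk340_5 chk340_6 chk340_7 chk340_8]) simp

theorem mainTheorem12:
  assumes "n \<in> {140, 196, 220, 260, 308, 340::nat}"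
  shows "\<exists>Q. is_DCA 4 (n+1) n Q \<and> DCA_normalized 4 n Q \<and> DCA_P1 4 n Q \<and> DCA_P2 4 n Q"
  using assms ex140 ex196 ex220 ex260 ex308 ex340 by auto

end
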